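(* Let $k,n$ be integers with $1\leq k\leq n$ and let $G$ be a bipartite graph of order $n$. If $e(G)\leq e(K_{k-1,n-k+1})$, then $\rho(G)\leq \rho(K_{k-1,n-k+1})$.
   Context: Graphs are finite and simple; $e(G)$ is the number of edges and $\rho(G)$ the largest eigenvalue of the adjacency matrix of $G$. $K_{a,b}$ is the complete bipartite graph with parts of sizes $a$ and $b$. *)

theory Defs
  imports "Jordan_Normal_Form.Char_Poly"
begin

definition simple_graph :: "nat \<Rightarrow> (nat \<Rightarrow> nat \<Rightarrow> bool) \<Rightarrow> bool" where
  "simple_graph n E \<longleftrightarrow>
     (\<forall>i j. E i j \<longrightarrow> i < n \<and> j < n) \<and>
     (\<forall>i j. E i j \<longrightarrow> E j i) \<and> (\<forall>i. \<not> E i i)"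

definition bipartite :: "nat \<Rightarrow> (nat \<Rightarrow> nat \<Rightarrow> bool) \<Rightarrow> bool" where
  "bipartite n E \<longleftrightarrow> (\<exists>S. S \<subseteq> {0..<n} \<and>
     (\<forall>i j. E i j \<longrightarrow> (i \<in> S \<longleftrightarrow> j \<notin> S)))"

definition num_edges :: "nat \<Rightarrow> (nat \<Rightarrow> nat \<Rightarrow> bool) \<Rightarrow> nat" where
  "num_edges n E = card {(i, j). i < j \<and> j < n \<and> E i j}"

definition adj_matrix :: "nat \<Rightarrow> (nat \<Rightarrow> nat \<Rightarrow> bool) \<Rightarrow> real mat" where
  "adj_matrix n E = mat n n (\<lambda>(i, j). if E i j then 1 else 0)"

text \<open>Largest eigenvalue of the adjacency matrix (real symmetric, so all
  eigenvalues are real).\<close>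
definition spec_rad :: "nat \<Rightarrow> (nat \<Rightarrow> nat \<Rightarrow> bool) \<Rightarrow> real" where
  "spec_rad n E = Max {x. eigenvalue (adj_matrix n E) x}"

definition complete_bipartite :: "nat \<Rightarrow> nat \<Rightarrow> nat \<Rightarrow> nat \<Rightarrow> bool" where
  "complete_bipartite a b i j \<longleftrightarrow> i < a + b \<and> j < a + b \<and> ((i < a) \<noteq> (j < a))"

end

theory Submission
  imports Defs "Jordan_Normal_Form.Spectral_Radius"
begin

lemma real_sym_ev:
  fixes A :: "real mat"
  assumes A: "A \<in> carrier_mat n n" and n: "n > 0"
    and sym: "\<And>i j. i < n \<Longrightarrow> j < n \<Longrightarrow> A$$(i,j) = A$$(j,i)"
  shows "\<exists>r. eigenvalue A r"
proof -
  define C :: "complex mat" where "C = of_real_hom.mat_hom A"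
  have C: "C \<in> carrier_mat n n" using A unfolding C_def by simp
  from spectrum_non_empty[OF C n] obtain l where "eigenvalue C l" unfolding spectrum_def by auto
  then obtain v where v: "v \<in> carrier_vec n" "v \<noteq> 0\<^sub>v n" "C *\<^sub>v v = l \<cdot>\<^sub>v v"
    unfolding eigenvalue_def eigenvector_def using C by auto
  have comp: "(\<Sum>j<n. of_real (A$$(i,j)) * v$j) = l * v$i" if i: "i < n" for i
  proof -
    have "(C *\<^sub>v v) $ i = l * v$i" using v(3) i v(1) by simp
    moreover have "(C *\<^sub>v v) $ i = (\<Sum>j<n. of_real (A$$(i,j)) * v$j)"
      using i v(1) A C unfolding C_def by (auto simp: scalar_prod_def lessThan_atLeast0 intro!: sum.cong)
    ultimately show ?thesis by simp
  qed
  define Q where "Q = (\<Sum>i<n. \<Sum>j<n. of_real (A$$(i,j)) * cnj (v$i) * v$j)"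
  define N where "N = (\<Sum>i<n. cnj (v$i) * v$i)"
  have QN: "Q = l * N"
  proof -
    have "Q = (\<Sum>i<n. cnj (v$i) * (\<Sum>j<n. of_real (A$$(i,j)) * v$j))"
      unfolding Q_def by (simp add: sum_distrib_left mult_ac)
    also have "\<dots> = (\<Sum>i<n. cnj (v$i) * (l * v$i))" by (rule sum.cong, auto simp: comp)
    finally show ?thesis unfolding N_def by (simp add: sum_distrib_left mult_ac)
  qed
  have cQ: "cnj Q = Q"
  proof -
    have "cnj Q = (\<Sum>i<n. \<Sum>j<n. of_real (A$$(i,j)) * v$i * cnj (v$j))"
      unfolding Q_def by (simp add: cnj_sum)
    also have "\<dots> = (\<Sum>j<n. \<Sum>i<n. of_real (A$$(i,j)) * v$i * cnj (v$j))"
      by (rule sum.swap)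
    also have "\<dots> = Q" unfolding Q_def
      by (rule sum.cong[OF refl], rule sum.cong[OF refl], auto simp: sym mult_ac)
    finally show ?thesis .
  qed
  have Nr: "N = of_real (\<Sum>i<n. (cmod (v$i))^2)"
    unfolding N_def of_real_sum complex_norm_square by (simp add: mult.commute)
  obtain i where i: "i < n" "v $ i \<noteq> 0" using v(1,2) by (metis eq_vecI carrier_vecD index_zero_vec)
  have Npos: "(\<Sum>i<n. (cmod (v$i))^2) > 0"
  proof -
    have "(\<Sum>i<n. (cmod (v$i))^2) \<ge> (cmod (v$i))^2"
      by (rule member_le_sum, insert i, auto)
    moreover have "(cmod (v$i))^2 > 0" using i by simp
    ultimately show ?thesis by linarith
  qed
  have "cnj l * N = l * N" using cQ QN Nr by simp
  moreover have "N \<noteq> 0" using Npos unfolding Nr by (metis of_real_eq_0_iff less_irrefl)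
  ultimately have "cnj l = l" by simp
  hence lr: "l = of_real (Re l)" by (metis Reals_cnj_iff of_real_Re)
  have "poly (char_poly C) l = 0" using eigenvalue_root_char_poly[OF C] \<open>eigenvalue C l\<close> by simp
  hence "poly (map_poly of_real (char_poly A)) (of_real (Re l) :: complex) = 0"
    using lr of_real_hom.char_poly_hom[OF A] unfolding C_def by metis
  hence "poly (char_poly A) (Re l) = 0" by (simp add: of_real_hom.poly_map_poly)
  thus ?thesis using eigenvalue_root_char_poly[OF A] by auto
qed

lemma cs_sum:
  fixes f :: "'a \<Rightarrow> real"
  shows "(\<Sum>x\<in>A. f x)^2 \<le> real (card A) * (\<Sum>x\<in>A. (f x)^2)"
proof (cases "finite A \<and> A \<noteq> {}")
  case False
  then show ?thesis by auto
next
  case True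
  define c where "c = real (card A)"
  define r where "r = (\<Sum>x\<in>A. f x) / c"
  have c: "c > 0" using True unfolding c_def by (simp add: card_gt_0_iff)
  have "0 \<le> (\<Sum>x\<in>A. (f x - r)\<^sup>2)" by (simp add: sum_nonneg)
  also have "\<dots> = (\<Sum>x\<in>A. (f x)\<^sup>2 - 2 * r * f x + r\<^sup>2)"
    by (intro sum.cong) (simp_all add: power2_eq_square algebra_simps)
  also have "\<dots> = (\<Sum>x\<in>A. (f x)\<^sup>2) - 2 * r * (\<Sum>x\<in>A. f x) + r\<^sup>2 * c"
    unfolding c_def by (simp add: sum.distrib sum_subtractf sum_distrib_left sum_distrib_right mult.commute)
  also have "\<dots> = (\<Sum>x\<in>A. (f x)\<^sup>2) - (\<Sum>x\<in>A. f x)\<^sup>2 / c"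
    using c by (simp add: r_def power2_eq_square field_simps)
  finally have "(\<Sum>x\<in>A. f x)\<^sup>2 / c \<le> (\<Sum>x\<in>A. (f x)\<^sup>2)" by simp
  thus ?thesis using c unfolding c_def by (simp add: pos_divide_le_eq mult.commute)
qed
lemma edges_card:
  assumes sg: "simple_graph n E" and bip: "\<And>i j. E i j \<Longrightarrow> (i \<in> S \<longleftrightarrow> j \<notin> S)"
  shows "card {(i,j). i \<in> S \<and> E i j} = num_edges n E"
proof -
  let ?P = "{(i,j). i \<in> S \<and> E i j}"
  let ?D = "{(i, j). i < j \<and> j < n \<and> E i j}"
  define f where "f = (\<lambda>p::nat\<times>nat. (min (fst p) (snd p), max (fst p) (snd p)))"
  have "inj_on f ?P"
  proof (rule inj_on_inverseI[where g="\<lambda>(a,b). if a \<in> S then (a,b) else (b,a)"])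
    fix p assume "p \<in> ?P"
    then obtain i j where h: "p = (i,j)" "i \<in> S" "E i j" by auto
    have "j \<notin> S" using bip h by auto
    thus "(\<lambda>(a,b). if a \<in> S then (a,b) else (b,a)) (f p) = p"
      using h unfolding f_def by (cases "i \<le> j") (auto simp: min_def max_def)
  qed
  moreover have "f ` ?P \<subseteq> ?D"
  proof
    fix p assume "p \<in> f ` ?P"
    then obtain i j where h0: "i \<in> S" "E i j" "p = f (i,j)" by blast
    hence h: "i \<in> S" "E i j" "p = (min i j, max i j)" unfolding f_def by simp_all
    have "i \<noteq> j" using sg h unfolding simple_graph_def by auto
    moreover have "i < n" "j < n" "E j i" using sg h unfolding simple_graph_def by auto
    ultimately show "p \<in> ?D" using h by (auto simp: min_def max_def)
  qed
  moreover have "?D \<subseteq> f ` ?P"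
  proof
    fix p assume "p \<in> ?D"
    then obtain i j where h: "i < j" "j < n" "E i j" "p = (i,j)" by auto
    have Eji: "E j i" using sg h unfolding simple_graph_def by auto
    show "p \<in> f ` ?P"
    proof (cases "i \<in> S")
      case True
      have "(i,j) \<in> ?P" "f (i,j) = p" using h True unfolding f_def by auto
      then show ?thesis by (metis image_eqI)
    next
      case False
      hence "j \<in> S" using bip h by auto
      have "(j,i) \<in> ?P" "f (j,i) = p" using h Eji \<open>j \<in> S\<close> unfolding f_def by auto
      then show ?thesis by (metis image_eqI)
    qed
  qed
  ultimately have e: "f ` ?P = ?D" and i: "inj_on f ?P" by blast+
  have "card ?P = card (f ` ?P)" using card_image[OF i] by simp
  then show ?thesis unfolding num_edges_def e .
qed
lemma sum_deg:
  assumes sg: "simple_graph n E" and fin: "finite S" and bip: "\<And>i j. E i j \<Longrightarrow> (i \<in> S \<longleftrightarrow> j \<notin> S)"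
  shows "(\<Sum>i\<in>S. card {j. j < n \<and> E i j}) = num_edges n E"
proof -
  have "(\<Sum>i\<in>S. card {j. j < n \<and> E i j}) = card (Sigma S (\<lambda>i. {j. j < n \<and> E i j}))"
    using fin by (simp add: card_SigmaI)
  also have "Sigma S (\<lambda>i. {j. j < n \<and> E i j}) = {(i,j). i \<in> S \<and> E i j}"
    using sg unfolding simple_graph_def by auto
  finally show ?thesis using edges_card[OF sg bip] by simp
qed

lemma bip_bound:
  fixes w :: "nat \<Rightarrow> real" and x :: real
  assumes sg: "simple_graph n E" and S: "S \<subseteq> {0..<n}" and bip: "\<And>i j. E i j \<Longrightarrow> (i \<in> S \<longleftrightarrow> j \<notin> S)"
    and eq: "\<And>i. i < n \<Longrightarrow> x * w i = (\<Sum>j\<in>{j. j < n \<and> E i j}. w j)"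
  shows "x^2 * (\<Sum>i<n. (w i)^2) \<le> real (num_edges n E) * (\<Sum>i<n. (w i)^2)"
proof -
  define N where "N i = {j. j < n \<and> E i j}" for i
  define T where "T = {0..<n} - S"
  define m where "m = real (num_edges n E)"
  have finN: "finite (N i)" for i unfolding N_def by auto
  have finS: "finite S" using S finite_subset by blast
  have finT: "finite T" unfolding T_def by auto
  have NS: "N i \<subseteq> T" if "i \<in> S" for i using bip that unfolding N_def T_def by auto
  have NT: "N j \<subseteq> S" if "j \<in> T" for j using bip that unfolding N_def T_def by auto
  have key: "x^2 * (w i)^2 \<le> real (card (N i)) * (\<Sum>j\<in>U. (w j)^2)"
    if "i < n" "N i \<subseteq> U" "finite U" for i U
  proof -
    have "x^2 * (w i)^2 = (\<Sum>j\<in>N i. w j)^2" using eq[OF that(1)] unfolding N_def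
      by (simp add: power_mult_distrib[symmetric])
    also have "\<dots> \<le> real (card (N i)) * (\<Sum>j\<in>N i. (w j)^2)" by (rule cs_sum)
    also have "\<dots> \<le> real (card (N i)) * (\<Sum>j\<in>U. (w j)^2)"
      by (intro mult_left_mono sum_mono2) (auto simp: that)
    finally show ?thesis .
  qed
  have bipT: "E i j \<Longrightarrow> (i \<in> T \<longleftrightarrow> j \<notin> T)" for i j
    using bip sg unfolding T_def simple_graph_def by auto
  have dS: "(\<Sum>i\<in>S. real (card (N i))) = m"
    using sum_deg[OF sg finS bip] unfolding N_def m_def by (metis of_nat_sum)
  have dT: "(\<Sum>i\<in>T. real (card (N i))) = m"
    using sum_deg[OF sg finT bipT] unfolding N_def m_def by (metis of_nat_sum)
  have h1: "x^2 * (\<Sum>i\<in>S. (w i)^2) \<le> m * (\<Sum>j\<in>T. (w j)^2)"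
  proof -
    have "x^2 * (\<Sum>i\<in>S. (w i)^2) = (\<Sum>i\<in>S. x^2 * (w i)^2)" by (simp add: sum_distrib_left)
    also have "\<dots> \<le> (\<Sum>i\<in>S. real (card (N i)) * (\<Sum>j\<in>T. (w j)^2))"
      by (rule sum_mono, rule key) (use S NS finT in auto)
    also have "\<dots> = (\<Sum>i\<in>S. real (card (N i))) * (\<Sum>j\<in>T. (w j)^2)"
      by (rule sum_distrib_right[symmetric])
    also have "\<dots> = m * (\<Sum>j\<in>T. (w j)^2)" using dS by simp
    finally show ?thesis .
  qed
  have h2: "x^2 * (\<Sum>i\<in>T. (w i)^2) \<le> m * (\<Sum>j\<in>S. (w j)^2)"
  proof -
    have "x^2 * (\<Sum>i\<in>T. (w i)^2) = (\<Sum>i\<in>T. x^2 * (w i)^2)" by (simp add: sum_distrib_left)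
    also have "\<dots> \<le> (\<Sum>i\<in>T. real (card (N i)) * (\<Sum>j\<in>S. (w j)^2))"
      by (rule sum_mono, rule key) (use NT finS in \<open>auto simp: T_def\<close>)
    also have "\<dots> = (\<Sum>i\<in>T. real (card (N i))) * (\<Sum>j\<in>S. (w j)^2)"
      by (rule sum_distrib_right[symmetric])
    also have "\<dots> = m * (\<Sum>j\<in>S. (w j)^2)" using dT by simp
    finally show ?thesis .
  qed
  have split: "(\<Sum>i<n. (w i)^2) = (\<Sum>i\<in>S. (w i)^2) + (\<Sum>i\<in>T. (w i)^2)"
  proof -
    have "{..<n} = S \<union> T" "S \<inter> T = {}" using S unfolding T_def by auto
    thus ?thesis using finS finT by (simp add: sum.union_disjoint)
  qed
  show ?thesis unfolding split m_def[symmetric] using h1 h2 by (simp add: distrib_left)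
qed
lemma adj_carrier: "adj_matrix n E \<in> carrier_mat n n"
  unfolding adj_matrix_def by simp

lemma adj_mult_index:
  assumes "i < n" "v \<in> carrier_vec n"
  shows "(adj_matrix n E *\<^sub>v v) $ i = (\<Sum>j\<in>{0..<n}. (if E i j then 1 else 0) * v $ j)"
  using assms unfolding adj_matrix_def by (auto simp: scalar_prod_def intro!: sum.cong)

lemma sum_if_const:
  "(\<Sum>j\<in>{0..<(n::nat)}. (if P j then c else 0) :: real) = real (card {j\<in>{0..<n}. P j}) * c"
proof -
  have "(\<Sum>j\<in>{0..<n}. (if P j then c else 0) :: real) = (\<Sum>j\<in>{j\<in>{0..<n}. P j}. c)"
    by (rule sum.inter_filter[symmetric]) simp
  thus ?thesis by simp
qed

lemma eig_bound:
  assumes sg: "simple_graph n E" and bp: "bipartite n E" and ev: "eigenvalue (adj_matrix n E) x"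
  shows "x^2 \<le> real (num_edges n E)"
proof -
  obtain S where S: "S \<subseteq> {0..<n}" and bip: "\<And>i j. E i j \<Longrightarrow> (i \<in> S \<longleftrightarrow> j \<notin> S)"
    using bp unfolding bipartite_def by blast
  obtain v where v: "v \<in> carrier_vec n" "v \<noteq> 0\<^sub>v n" "adj_matrix n E *\<^sub>v v = x \<cdot>\<^sub>v v"
    using ev adj_carrier[of n E] unfolding eigenvalue_def eigenvector_def by auto
  define w where "w i = v $ i" for i
  have eq: "x * w i = (\<Sum>j\<in>{j. j < n \<and> E i j}. w j)" if i: "i < n" for i
  proof -
    have "x * w i = (adj_matrix n E *\<^sub>v v) $ i" using v(3) v(1) i unfolding w_def by simp
    also have "\<dots> = (\<Sum>j\<in>{0..<n}. (if E i j then 1 else 0) * v $ j)" by (rule adj_mult_index[OF i v(1)])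
    also have "\<dots> = (\<Sum>j\<in>{0..<n}. if E i j then w j else 0)" unfolding w_def by (intro sum.cong) auto
    also have "\<dots> = (\<Sum>j\<in>{j\<in>{0..<n}. E i j}. w j)" by (rule sum.inter_filter[symmetric]) simp
    also have "{j\<in>{0..<n}. E i j} = {j. j < n \<and> E i j}" by auto
    finally show ?thesis .
  qed
  have main: "x^2 * (\<Sum>i<n. (w i)^2) \<le> real (num_edges n E) * (\<Sum>i<n. (w i)^2)"
    by (rule bip_bound[OF sg S bip eq])
  obtain i where i: "i < n" "v $ i \<noteq> 0" using v(1,2) by (metis eq_vecI carrier_vecD index_zero_vec)
  have pos: "(\<Sum>i<n. (w i)^2) > 0"
  proof -
    have "(\<Sum>i<n. (w i)^2) \<ge> (w i)^2" by (rule member_le_sum, insert i, auto)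
    moreover have "(w i)^2 > 0" using i unfolding w_def by simp
    ultimately show ?thesis by linarith
  qed
  show ?thesis using main pos by simp
qed

lemma kb_edges:
  assumes "n = a + b"
  shows "num_edges n (complete_bipartite a b) = a * b"
proof -
  have "{(i, j). i < j \<and> j < n \<and> complete_bipartite a b i j} = {0..<a} \<times> {a..<a+b}"
    using assms unfolding complete_bipartite_def by auto
  thus ?thesis unfolding num_edges_def by simp
qed

lemma kb_eig:
  assumes n: "n = a + b" "n > 0" and b: "b > 0"
  shows "eigenvalue (adj_matrix n (complete_bipartite a b)) (sqrt (real a * real b))"
proof (cases "a = 0")
  case True
  define v :: "real vec" where "v = vec n (\<lambda>_. 1)"
  have "eigenvector (adj_matrix n (complete_bipartite a b)) v 0"
    unfolding eigenvector_def
  proof (intro conjI)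
    show "v \<in> carrier_vec (dim_row (adj_matrix n (complete_bipartite a b)))"
      unfolding v_def adj_matrix_def by simp
    show "v \<noteq> 0\<^sub>v (dim_row (adj_matrix n (complete_bipartite a b)))"
      unfolding v_def adj_matrix_def using n by (metis dim_row_mat(1) index_vec index_zero_vec(1) zero_neq_one)
    show "adj_matrix n (complete_bipartite a b) *\<^sub>v v = 0 \<cdot>\<^sub>v v"
      by (rule eq_vecI) (use True in \<open>auto simp: adj_mult_index v_def complete_bipartite_def adj_matrix_def scalar_prod_def\<close>)
  qed
  thus ?thesis using True unfolding eigenvalue_def by auto
next
  case False
  define v :: "real vec" where "v = vec n (\<lambda>i. if i < a then sqrt b else sqrt a)"
  have vc: "v \<in> carrier_vec n" unfolding v_def by simp
  have comp: "(adj_matrix n (complete_bipartite a b) *\<^sub>v v) $ i = sqrt (real a * real b) * v $ i"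
    if i: "i < n" for i
  proof -
    have "(adj_matrix n (complete_bipartite a b) *\<^sub>v v) $ i
        = (\<Sum>j\<in>{0..<n}. (if complete_bipartite a b i j then 1 else 0) * v $ j)"
      by (rule adj_mult_index[OF i vc])
    also have "\<dots> = (\<Sum>j\<in>{0..<n}. if (if i < a then a \<le> j else j < a) then (if i < a then sqrt a else sqrt b) else 0)"
      using i n unfolding v_def complete_bipartite_def by (intro sum.cong) auto
    also have "\<dots> = sqrt (real a * real b) * v $ i"
    proof (cases "i < a")
      case True
      have "{j\<in>{0..<n}. a \<le> j} = {a..<n}" by auto
      hence "(\<Sum>j\<in>{0..<n}. if a \<le> j then sqrt a else 0) = real b * sqrt a"
        using n by (simp add: sum_if_const)
      moreover have "sqrt (real a * real b) * sqrt b = real b * sqrt a"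
        by (simp add: real_sqrt_mult)
      ultimately show ?thesis using True i unfolding v_def by simp
    next
      case False
      have "{j\<in>{0..<n}. j < a} = {0..<a}" using n by auto
      hence "(\<Sum>j\<in>{0..<n}. if j < a then sqrt b else 0) = real a * sqrt b"
        by (simp add: sum_if_const)
      moreover have "sqrt (real a * real b) * sqrt a = real a * sqrt b"
        by (simp add: real_sqrt_mult)
      ultimately show ?thesis using False i unfolding v_def by simp
    qed
    finally show ?thesis .
  qed
  have "eigenvector (adj_matrix n (complete_bipartite a b)) v (sqrt (real a * real b))"
    unfolding eigenvector_def
  proof (intro conjI)
    show "v \<in> carrier_vec (dim_row (adj_matrix n (complete_bipartite a b)))"
      unfolding v_def adj_matrix_def by simp
    have "v $ 0 \<noteq> 0" using False n b unfolding v_def by simp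
    thus "v \<noteq> 0\<^sub>v (dim_row (adj_matrix n (complete_bipartite a b)))"
      using n unfolding adj_matrix_def by auto
    show "adj_matrix n (complete_bipartite a b) *\<^sub>v v = sqrt (real a * real b) \<cdot>\<^sub>v v"
      by (rule eq_vecI) (use comp vc in \<open>auto simp: adj_matrix_def\<close>)
  qed
  thus ?thesis unfolding eigenvalue_def by auto
qed
theorem proposition5:
  fixes k n :: nat and E :: "nat \<Rightarrow> nat \<Rightarrow> bool"
  assumes "1 \<le> k" and "k \<le> n"
    and "simple_graph n E" and "bipartite n E"
    and "num_edges n E \<le> num_edges n (complete_bipartite (k - 1) (n - k + 1))"
  shows "spec_rad n E \<le> spec_rad n (complete_bipartite (k - 1) (n - k + 1))"
proof -
  define a where "a = k - 1"
  define b where "b = n - k + 1"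
  have n: "n = a + b" "n > 0" "b > 0" using assms(1,2) by (auto simp: a_def b_def)
  define SG where "SG = {x. eigenvalue (adj_matrix n E) x}"
  define SK where "SK = {x. eigenvalue (adj_matrix n (complete_bipartite a b)) x}"
  have finG: "finite SG" using card_finite_spectrum(1)[OF adj_carrier] unfolding spectrum_def SG_def by simp
  have finK: "finite SK" using card_finite_spectrum(1)[OF adj_carrier] unfolding spectrum_def SK_def by simp
  have sym: "adj_matrix n E $$ (i,j) = adj_matrix n E $$ (j,i)" if "i < n" "j < n" for i j
    using assms(3) that unfolding adj_matrix_def simple_graph_def by auto
  obtain r where "eigenvalue (adj_matrix n E) r" using real_sym_ev[OF adj_carrier n(2) sym] by blast
  hence neG: "SG \<noteq> {}" unfolding SG_def by auto
  have "Max SG \<in> SG" by (rule Max_in[OF finG neG])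
  hence "(Max SG)^2 \<le> real (num_edges n E)" using eig_bound[OF assms(3,4)] unfolding SG_def by auto
  also have "\<dots> \<le> real (num_edges n (complete_bipartite a b))" using assms(5) unfolding a_def b_def by simp
  also have "\<dots> = real a * real b" using kb_edges[OF n(1)] by simp
  finally have "Max SG \<le> sqrt (real a * real b)" by (rule real_le_rsqrt)
  also have "sqrt (real a * real b) \<le> Max SK"
    by (rule Max_ge[OF finK]) (use kb_eig[OF n] in \<open>simp add: SK_def\<close>)
  finally show ?thesis unfolding spec_rad_def SG_def SK_def a_def b_def .
qed

end
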